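(* Let $\langle E,\rightarrow\rangle$ be a computation, $Q$ a subset of the processes, and $b$ a regular predicate that depends only on variables of processes in $Q$. Then the graph $H_b(E)$ has the same set of consistent cuts as the slice of $\langle E,\rightarrow\rangle$ with respect to $b$.
   Context: A computation is a directed graph $\langle E, \rightarrow\rangle$ whose vertices (events) are partitioned among processes $p_1,\dots,p_n$; events on each process are totally ordered, each process $p_i$ has an initial event $\bot_i$ and final event $\top_i$, the path relation contains Lamport's happened-before relation, all initial events lie in one strongly connected component and all final events in one. $\top$ is the set of final events, $\mathrm{succ}(e)$ the successor of $e$ on its process. A vertex subset $C$ of a directed graph is a consistent cut if for every edge $(u,v)$, $v\in C$ implies $u\in C$. A predicate (a boolean function of process variables evaluated on non-trivial consistent cuts) is regular if whenever consistent cuts $C_1,C_2$ satisfy it, so do $C_1\cap C_2$ and $C_1\cup C_2$. The slice of a computation with respect to $b$ is a directed graph on its events whose consistent cuts include every consistent cut satisfying $b$ and which has the fewest consistent cuts among all such graphs (paths in it are determined by its set of consistent cuts). Let $E_Q$ be the set of events on processes in $Q$; the projection of $\langle E,\rightarrow\rangle$ on $Q$ is the directed graph on $E_Q$ with an edge $(e,f)$ whenever there is a path from $e$ to $f$ in $\langle E,\rightarrow\rangle$; $b$ is evaluated on its cuts. For an event $e$, $F(e)[i]$ is the earliest event on $p_i$ reachable from $e$ in $\langle E,\rightarrow\rangle$; for $e\in E_Q$ and $p_i\in Q$, $F^Q_b(e)[i]$ is the earliest event on $p_i$ reachable from $e$ in the slice of the projection with respect to $b$. Define $K_b(e)[i]=F^Q_b(e)[i]$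 if $e\in E_Q$ and $p_i\in Q$, and $K_b(e)[i]=F(e)[i]$ otherwise. $H_b(E)$ is the directed graph with vertex set $E$ and edges from each $e\notin\top$ to $\mathrm{succ}(e)$ and from each event $e$ to $K_b(e)[i]$ for every process $p_i$. *)

theory Defs
  imports Main
begin

text \<open>The events of process i are
  (i,0), (i,1), ..., (i, len i - 1), totally ordered by the second component;
  (i,0) is the initial event and (i, len i - 1) the final event of process i.\<close>

type_synonym event = "nat \<times> nat"

definition events :: "nat \<Rightarrow> (nat \<Rightarrow> nat) \<Rightarrow> event set" where
  "events n len = {(i, k). i < n \<and> k < len i}"

definition final_events :: "nat \<Rightarrow> (nat \<Rightarrow> nat) \<Rightarrow> event set" where
  "final_events n len = {(i, len i - 1) | i. i < n}"

definition succ_ev :: "event \<Rightarrow> event" where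
  "succ_ev e = (fst e, Suc (snd e))"

definition computation :: "nat \<Rightarrow> (nat \<Rightarrow> nat) \<Rightarrow> (event \<times> event) set \<Rightarrow> bool" where
  "computation n len R \<longleftrightarrow>
     n \<ge> 1 \<and> (\<forall>i<n. len i \<ge> 1) \<and> R \<subseteq> events n len \<times> events n len \<and>
     (\<forall>i<n. \<forall>k. Suc k < len i \<longrightarrow> ((i, k), (i, Suc k)) \<in> R\<^sup>+) \<and>
     (\<forall>i<n. \<forall>j<n. ((i, 0), (j, 0)) \<in> R\<^sup>*) \<and>
     (\<forall>i<n. \<forall>j<n. ((i, len i - 1), (j, len j - 1)) \<in> R\<^sup>*)"

definition cuts :: "'a set \<Rightarrow> ('a \<times> 'a) set \<Rightarrow> 'a set set" where
  "cuts V G = {C. C \<subseteq> V \<and> (\<forall>(u, v)\<in>G. v \<in> C \<longrightarrow> u \<in> C)}"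

definition nontrivial_cuts :: "'a set \<Rightarrow> ('a \<times> 'a) set \<Rightarrow> 'a set set" where
  "nontrivial_cuts V G = {C \<in> cuts V G. C \<noteq> {} \<and> C \<noteq> V}"

definition sat_cuts :: "'a set \<Rightarrow> ('a \<times> 'a) set \<Rightarrow> ('a set \<Rightarrow> bool) \<Rightarrow> 'a set set" where
  "sat_cuts V G b = {C \<in> nontrivial_cuts V G. b C}"

definition is_slice :: "'a set \<Rightarrow> ('a \<times> 'a) set \<Rightarrow> ('a set \<Rightarrow> bool) \<Rightarrow> ('a \<times> 'a) set \<Rightarrow> bool" where
  "is_slice V G b T \<longleftrightarrow>
     T \<subseteq> V \<times> V \<and> sat_cuts V G b \<subseteq> cuts V T \<and>
     (\<forall>T'. T' \<subseteq> V \<times> V \<and> sat_cuts V G b \<subseteq> cuts V T' \<longrightarrow> card (cuts V T) \<le> card (cuts V T'))"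

definition regular :: "event set \<Rightarrow> (event \<times> event) set \<Rightarrow> (event set \<Rightarrow> bool) \<Rightarrow> bool" where
  "regular V G b \<longleftrightarrow>
     (\<forall>C1\<in>sat_cuts V G b. \<forall>C2\<in>sat_cuts V G b. b (C1 \<inter> C2) \<and> b (C1 \<union> C2))"

definition proj_events :: "nat \<Rightarrow> (nat \<Rightarrow> nat) \<Rightarrow> nat set \<Rightarrow> event set" where
  "proj_events n len Q = {e \<in> events n len. fst e \<in> Q}"

definition proj_rel :: "nat \<Rightarrow> (nat \<Rightarrow> nat) \<Rightarrow> (event \<times> event) set \<Rightarrow> nat set \<Rightarrow> (event \<times> event) set" where
  "proj_rel n len R Q = {(e, f). e \<in> proj_events n len Q \<and> f \<in> proj_events n len Q \<and> (e, f) \<in> R\<^sup>+}"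

definition depends_only_on :: "nat \<Rightarrow> (nat \<Rightarrow> nat) \<Rightarrow> nat set \<Rightarrow> (event set \<Rightarrow> bool) \<Rightarrow> bool" where
  "depends_only_on n len Q b \<longleftrightarrow>
     (\<forall>C C'. C \<subseteq> events n len \<longrightarrow> C' \<subseteq> events n len \<longrightarrow>
        C \<inter> proj_events n len Q = C' \<inter> proj_events n len Q \<longrightarrow> b C = b C')"

definition earliest :: "(nat \<Rightarrow> nat) \<Rightarrow> (event \<times> event) set \<Rightarrow> event \<Rightarrow> nat \<Rightarrow> event" where
  "earliest len G e i = (i, LEAST k. k < len i \<and> (e, (i, k)) \<in> G\<^sup>*)"

text \<open>K_b, where T is the slice of the projection on Q with respect to b.\<close>
definition Kb :: "(nat \<Rightarrow> nat) \<Rightarrow> (event \<times> event) set \<Rightarrow> nat set \<Rightarrow> (event \<times> event) set \<Rightarrow> event \<Rightarrow> nat \<Rightarrow> event" where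
  "Kb len R Q T e i = (if fst e \<in> Q \<and> i \<in> Q then earliest len T e i else earliest len R e i)"

definition Hb :: "nat \<Rightarrow> (nat \<Rightarrow> nat) \<Rightarrow> (event \<times> event) set \<Rightarrow> nat set \<Rightarrow> (event \<times> event) set \<Rightarrow> (event \<times> event) set" where
  "Hb n len R Q T =
     {(e, succ_ev e) | e. e \<in> events n len \<and> e \<notin> final_events n len} \<union>
     {(e, Kb len R Q T e i) | e i. e \<in> events n len \<and> i < n}"

end

theory Submission
  imports Defs
begin


lemma inter_closed:
  "finite F \<Longrightarrow> F \<noteq> {} \<Longrightarrow> F \<subseteq> L \<Longrightarrow> (\<forall>A\<in>L. \<forall>B\<in>L. A \<inter> B \<in> L) \<Longrightarrow> \<Inter>F \<in> L"
  by (induction F rule: finite_ne_induct) auto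

lemma union_closed:
  "finite F \<Longrightarrow> F \<noteq> {} \<Longrightarrow> F \<subseteq> L \<Longrightarrow> (\<forall>A\<in>L. \<forall>B\<in>L. A \<union> B \<in> L) \<Longrightarrow> \<Union>F \<in> L"
  by (induction F rule: finite_ne_induct) auto

lemma cuts_closure:
  assumes fin: "finite V" and LP: "L \<subseteq> Pow V" and e: "{} \<in> L" and v: "V \<in> L"
    and cl: "\<forall>A\<in>L. \<forall>B\<in>L. A \<inter> B \<in> L \<and> A \<union> B \<in> L"
  shows "cuts V {(u,w). u \<in> V \<and> w \<in> V \<and> (\<forall>C\<in>L. w \<in> C \<longrightarrow> u \<in> C)} = L"
    (is "cuts V ?G = L")
proof
  show "L \<subseteq> cuts V ?G" using LP by (auto simp: cuts_def)
next
  show "cuts V ?G \<subseteq> L"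
  proof
    fix C assume C: "C \<in> cuts V ?G"
    hence CV: "C \<subseteq> V" by (auto simp: cuts_def)
    define D where "D w = \<Inter>{X\<in>L. w \<in> X}" for w
    have DL: "D w \<in> L" if "w \<in> V" for w
      unfolding D_def
    proof (rule inter_closed)
      have "{X\<in>L. w \<in> X} \<subseteq> Pow V" using LP by auto
      thus "finite {X\<in>L. w \<in> X}" using fin by (meson finite_Pow_iff finite_subset)
      show "{X\<in>L. w \<in> X} \<noteq> {}" using v that by auto
    qed (use cl in auto)
    have DC: "D w \<subseteq> C" if "w \<in> C" for w
    proof
      fix u assume u: "u \<in> D w"
      have "u \<in> V" using u v that CV unfolding D_def by auto
      hence "(u,w) \<in> ?G" using u that CV unfolding D_def by auto
      thus "u \<in> C" using C that unfolding cuts_def by auto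
    qed
    have "C = \<Union>(D ` C)" using DC unfolding D_def using v CV by auto
    show "C \<in> L"
    proof (cases "C = {}")
      case True thus ?thesis using e by simp
    next
      case False
      have "\<Union>(D ` C) \<in> L"
        by (rule union_closed) (use False fin CV DL cl finite_subset[OF CV fin] in auto)
      thus ?thesis using \<open>C = \<Union>(D ` C)\<close> by simp
    qed
  qed
qed

lemma slice_cuts:
  assumes fin: "finite V" and sl: "is_slice V G b T"
    and cl: "\<forall>A\<in>sat_cuts V G b \<union> {{}, V}. \<forall>B\<in>sat_cuts V G b \<union> {{}, V}.
               A \<inter> B \<in> sat_cuts V G b \<union> {{}, V} \<and> A \<union> B \<in> sat_cuts V G b \<union> {{}, V}"
  shows "cuts V T = sat_cuts V G b \<union> {{}, V}"
proof -
  let ?L = "sat_cuts V G b \<union> {{}, V}"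
  let ?G = "{(u,w). u \<in> V \<and> w \<in> V \<and> (\<forall>C\<in>?L. w \<in> C \<longrightarrow> u \<in> C)}"
  have LP: "?L \<subseteq> Pow V" by (auto simp: sat_cuts_def nontrivial_cuts_def cuts_def)
  have G0: "cuts V ?G = ?L" by (rule cuts_closure[OF fin LP _ _ cl]) auto
  have TV: "T \<subseteq> V \<times> V" and sT: "sat_cuts V G b \<subseteq> cuts V T" using sl by (auto simp: is_slice_def)
  have "card (cuts V T) \<le> card (cuts V ?G)"
  proof -
    have "?G \<subseteq> V \<times> V" by auto
    moreover have "sat_cuts V G b \<subseteq> cuts V ?G" unfolding G0 by (rule Un_upper1)
    ultimately show ?thesis using sl unfolding is_slice_def by blast
  qed
  hence c: "card (cuts V T) \<le> card ?L" using G0 by simp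
  have sub: "?L \<subseteq> cuts V T" using sT TV by (auto simp: cuts_def)
  have "cuts V T \<subseteq> Pow V" by (auto simp: cuts_def)
  hence "finite (cuts V T)" using fin by (meson finite_Pow_iff finite_subset)
  thus ?thesis using card_seteq[OF _ sub c] by simp
qed




lemma cut_rtrancl:
  assumes C: "C \<in> cuts V G" and r: "(u,w) \<in> G\<^sup>*" shows "w \<in> C \<longrightarrow> u \<in> C"
  using r
proof (induction rule: rtrancl_induct)
  case base thus ?case by simp
next
  case (step y z) thus ?case using C unfolding cuts_def by auto
qed

lemma reach_of_cuts:
  assumes GV: "G \<subseteq> V \<times> V" and w: "w \<in> V" and all: "\<forall>C\<in>cuts V G. w \<in> C \<longrightarrow> u \<in> C"
  shows "(u,w) \<in> G\<^sup>*"
proof -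
  define C where "C = {x\<in>V. (x,w) \<in> G\<^sup>*}"
  have "C \<in> cuts V G" unfolding cuts_def
  proof (intro CollectI conjI ballI)
    show "C \<subseteq> V" unfolding C_def by blast
  next
    fix x assume x: "x \<in> G"
    obtain a c where ac: "x = (a,c)" by (cases x)
    have "c \<in> C \<longrightarrow> a \<in> C"
    proof
      assume "c \<in> C"
      hence cw: "(c,w) \<in> G\<^sup>*" unfolding C_def by simp
      have "(a,c) \<in> G" using x ac by simp
      hence "(a,w) \<in> G\<^sup>*" using cw by (rule converse_rtrancl_into_rtrancl)
      moreover have "a \<in> V" using GV \<open>(a,c) \<in> G\<close> by blast
      ultimately show "a \<in> C" unfolding C_def by simp
    qed
    thus "case x of (a, c) \<Rightarrow> c \<in> C \<longrightarrow> a \<in> C" unfolding ac by simp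
  qed
  moreover have "w \<in> C" using w unfolding C_def by simp
  ultimately have "u \<in> C" using all by blast
  thus ?thesis unfolding C_def by simp
qed

lemma earliest_props:
  assumes "(e,(i,k)) \<in> G\<^sup>*" "k < len i"
  shows "\<exists>k0. earliest len G e i = (i,k0) \<and> k0 < len i \<and> (e,(i,k0)) \<in> G\<^sup>* \<and> k0 \<le> k"
proof -
  let ?P = "\<lambda>k. k < len i \<and> (e, (i, k)) \<in> G\<^sup>*"
  have "?P k" using assms by simp
  hence "?P (LEAST k. ?P k)" "(LEAST k. ?P k) \<le> k" by (rule LeastI, rule Least_le)
  thus ?thesis unfolding earliest_def by auto
qed



lemma earliest_props2:
  assumes "\<exists>k<len i. (e,(i,k)) \<in> G\<^sup>*"
  shows "\<exists>k0. earliest len G e i = (i,k0) \<and> k0 < len i \<and> (e,(i,k0)) \<in> G\<^sup>* \<and>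
           (\<forall>k. k < len i \<and> (e,(i,k)) \<in> G\<^sup>* \<longrightarrow> k0 \<le> k)"
proof -
  let ?P = "\<lambda>k. k < len i \<and> (e, (i, k)) \<in> G\<^sup>*"
  obtain k where "?P k" using assms by blast
  hence "?P (LEAST k. ?P k)" by (rule LeastI)
  moreover have "\<forall>k. ?P k \<longrightarrow> (LEAST k. ?P k) \<le> k" by (auto intro: Least_le)
  ultimately show ?thesis unfolding earliest_def by auto
qed

lemma down_set_cut:
  assumes GV: "G \<subseteq> V \<times> V"
  shows "{x\<in>V. \<exists>w\<in>D. (x,w) \<in> G\<^sup>*} \<in> cuts V G"
  unfolding cuts_def
proof (intro CollectI conjI ballI)
  show "{x\<in>V. \<exists>w\<in>D. (x,w) \<in> G\<^sup>*} \<subseteq> V" by blast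
next
  fix x assume x: "x \<in> G"
  obtain a c where ac: "x = (a,c)" by (cases x)
  have "c \<in> {x\<in>V. \<exists>w\<in>D. (x,w) \<in> G\<^sup>*} \<longrightarrow> a \<in> {x\<in>V. \<exists>w\<in>D. (x,w) \<in> G\<^sup>*}"
  proof
    assume "c \<in> {x\<in>V. \<exists>w\<in>D. (x,w) \<in> G\<^sup>*}"
    then obtain w where w: "w \<in> D" and cw: "(c,w) \<in> G\<^sup>*" by blast
    have "(a,c) \<in> G" using x ac by simp
    hence "(a,w) \<in> G\<^sup>*" using cw by (rule converse_rtrancl_into_rtrancl)
    moreover have "a \<in> V" using GV \<open>(a,c) \<in> G\<close> by blast
    ultimately show "a \<in> {x\<in>V. \<exists>w\<in>D. (x,w) \<in> G\<^sup>*}" using w by blast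
  qed
  thus "case x of (a, c) \<Rightarrow> c \<in> {x\<in>V. \<exists>w\<in>D. (x,w) \<in> G\<^sup>*} \<longrightarrow> a \<in> {x\<in>V. \<exists>w\<in>D. (x,w) \<in> G\<^sup>*}"
    unfolding ac by simp
qed

lemma cuts_Int: "A \<in> cuts V G \<Longrightarrow> B \<in> cuts V G \<Longrightarrow> A \<inter> B \<in> cuts V G"
  by (auto simp: cuts_def)
lemma cuts_Un: "A \<in> cuts V G \<Longrightarrow> B \<in> cuts V G \<Longrightarrow> A \<union> B \<in> cuts V G"
  by (auto simp: cuts_def)

lemma L_closed:
  assumes "\<forall>A\<in>sat_cuts V G b. \<forall>B\<in>sat_cuts V G b. b (A \<inter> B) \<and> b (A \<union> B)"
  shows "\<forall>A\<in>sat_cuts V G b \<union> {{}, V}. \<forall>B\<in>sat_cuts V G b \<union> {{}, V}.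
               A \<inter> B \<in> sat_cuts V G b \<union> {{}, V} \<and> A \<union> B \<in> sat_cuts V G b \<union> {{}, V}"
proof (intro ballI)
  fix A B assume A: "A \<in> sat_cuts V G b \<union> {{}, V}" and B: "B \<in> sat_cuts V G b \<union> {{}, V}"
  have AV: "A \<subseteq> V" and BV: "B \<subseteq> V" using A B
    by (auto simp: sat_cuts_def nontrivial_cuts_def cuts_def)
  show "A \<inter> B \<in> sat_cuts V G b \<union> {{}, V} \<and> A \<union> B \<in> sat_cuts V G b \<union> {{}, V}"
  proof (cases "A \<in> sat_cuts V G b \<and> B \<in> sat_cuts V G b")
    case True
    hence c: "A \<in> cuts V G" "B \<in> cuts V G" by (auto simp: sat_cuts_def nontrivial_cuts_def)
    have "b (A \<inter> B)" "b (A \<union> B)" using assms True by auto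
    thus ?thesis using cuts_Int[OF c] cuts_Un[OF c]
      by (auto simp: sat_cuts_def nontrivial_cuts_def)
  next
    case False
    hence "A = {} \<or> A = V \<or> B = {} \<or> B = V" using A B by auto
    thus ?thesis using A B AV BV by (auto simp: Int_absorb1 Int_absorb2 Un_absorb1 Un_absorb2)
  qed
qed

lemma proc_order:
  assumes "computation n len R" "j < n" "k \<le> m" "m < len j"
  shows "((j,k),(j,m)) \<in> R\<^sup>*"
  using assms(3,4)
proof (induction m)
  case 0 thus ?case by simp
next
  case (Suc m)
  show ?case
  proof (cases "k = Suc m")
    case True thus ?thesis by simp
  next
    case False
    hence "((j,k),(j,m)) \<in> R\<^sup>*" using Suc by simp
    moreover have "((j,m),(j,Suc m)) \<in> R\<^sup>+" using assms(1,2) Suc.prems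
      unfolding computation_def by blast
    ultimately show ?thesis by simp
  qed
qed



theorem theorem10:
  fixes n :: nat and len :: "nat \<Rightarrow> nat" and R :: "(event \<times> event) set"
    and Q :: "nat set" and b :: "event set \<Rightarrow> bool"
    and T S :: "(event \<times> event) set"
  assumes "computation n len R"
    and "Q \<subseteq> {..<n}" and "Q \<noteq> {}"
    and "regular (events n len) R b"
    and "depends_only_on n len Q b"
    and "is_slice (proj_events n len Q) (proj_rel n len R Q) b T"
    and "is_slice (events n len) R b S"
  shows "cuts (events n len) (Hb n len R Q T) = cuts (events n len) S"
proof -
  note comp = assms(1)
  define V where "V = events n len"
  define VQ where "VQ = proj_events n len Q"
  define P where "P = proj_rel n len R Q"
  define H where "H = Hb n len R Q T"
  define L where "L = sat_cuts V R b \<union> {{}, V}"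
  define Lq where "Lq = sat_cuts VQ P b \<union> {{}, VQ}"
  have lenpos: "\<And>i. i < n \<Longrightarrow> len i \<ge> 1" using comp unfolding computation_def by blast
  have RV: "R \<subseteq> V \<times> V" using comp unfolding computation_def V_def by blast
  have init: "\<And>i j. i < n \<Longrightarrow> j < n \<Longrightarrow> ((i, 0), (j, 0)) \<in> R\<^sup>*"
    using comp unfolding computation_def by blast
  have fin: "\<And>i j. i < n \<Longrightarrow> j < n \<Longrightarrow> ((i, len i - 1), (j, len j - 1)) \<in> R\<^sup>*"
    using comp unfolding computation_def by blast
  have po: "\<And>i k. i < n \<Longrightarrow> Suc k < len i \<Longrightarrow> ((i, k), (i, Suc k)) \<in> R\<^sup>+"
    using comp unfolding computation_def by blast
  have Vdef: "V = (SIGMA i:{..<n}. {..<len i})" unfolding V_def events_def by auto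
  have finV: "finite V" unfolding Vdef by auto
  have VQV: "VQ \<subseteq> V" unfolding VQ_def V_def proj_events_def by auto
  have finVQ: "finite VQ" using finV VQV finite_subset by blast
  have inV: "\<And>j k. (j,k) \<in> V \<longleftrightarrow> j < n \<and> k < len j" unfolding V_def events_def by auto
  have inVQ: "\<And>j k. (j,k) \<in> VQ \<longleftrightarrow> j < n \<and> k < len j \<and> j \<in> Q"
    unfolding VQ_def V_def proj_events_def events_def by auto
  have inP: "\<And>u w. (u,w) \<in> P \<longleftrightarrow> u \<in> VQ \<and> w \<in> VQ \<and> (u,w) \<in> R\<^sup>+"
    unfolding P_def VQ_def proj_rel_def by auto
  have dep: "\<And>C C'. C \<subseteq> V \<Longrightarrow> C' \<subseteq> V \<Longrightarrow> C \<inter> VQ = C' \<inter> VQ \<Longrightarrow> b C = b C'"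
    using assms(5) unfolding depends_only_on_def V_def VQ_def by blast
  have Rreach: "\<And>j k i. (j,k) \<in> V \<Longrightarrow> i < n \<Longrightarrow> ((j,k),(i, len i - 1)) \<in> R\<^sup>*"
  proof -
    fix j k i assume a: "(j,k) \<in> V" "i < n"
    hence "((j,k),(j,len j - 1)) \<in> R\<^sup>*" using proc_order[OF comp] inV by auto
    thus "((j,k),(i, len i - 1)) \<in> R\<^sup>*" using fin a inV by (meson rtrancl_trans)
  qed
  have clL: "\<forall>A\<in>L. \<forall>B\<in>L. A \<inter> B \<in> L \<and> A \<union> B \<in> L"
    unfolding L_def by (rule L_closed) (use assms(4) in \<open>auto simp: regular_def V_def\<close>)
  have cutsS: "cuts V S = L"
    unfolding L_def by (rule slice_cuts[OF finV]) (use assms(7) clL in \<open>auto simp: V_def L_def\<close>)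
  have lift: "\<exists>C\<in>sat_cuts V R b. C \<inter> VQ = D" if D: "D \<in> sat_cuts VQ P b" for D
  proof -
    have Dc: "D \<in> cuts VQ P" "D \<noteq> {}" "D \<noteq> VQ" "b D"
      using D by (auto simp: sat_cuts_def nontrivial_cuts_def)
    have DVQ: "D \<subseteq> VQ" using Dc by (auto simp: cuts_def)
    define C where "C = {u\<in>V. \<exists>w\<in>D. (u,w) \<in> R\<^sup>*}"
    have CQ: "C \<inter> VQ = D"
    proof
      show "D \<subseteq> C \<inter> VQ" using DVQ VQV unfolding C_def by auto
      show "C \<inter> VQ \<subseteq> D"
      proof
        fix u assume u: "u \<in> C \<inter> VQ"
        then obtain w where w: "w \<in> D" "(u,w) \<in> R\<^sup>*" unfolding C_def by auto
        show "u \<in> D"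
        proof (cases "u = w")
          case True thus ?thesis using w by simp
        next
          case False
          hence "(u,w) \<in> R\<^sup>+" using w rtranclD by metis
          hence "(u,w) \<in> P" using inP u w DVQ by auto
          thus ?thesis using Dc(1) w unfolding cuts_def by auto
        qed
      qed
    qed
    have Cc: "C \<in> cuts V R" unfolding C_def by (rule down_set_cut[OF RV])
    have CV: "C \<subseteq> V" unfolding C_def by auto
    have "C \<noteq> {}" using CQ Dc by auto
    moreover have "C \<noteq> V" using CQ Dc VQV by auto
    moreover have "b C" using dep[OF CV, of D] DVQ VQV CQ Dc by auto
    ultimately have "C \<in> sat_cuts V R b" using Cc by (auto simp: sat_cuts_def nontrivial_cuts_def)
    thus ?thesis using CQ by blast
  qed
  have regQ: "\<forall>A\<in>sat_cuts VQ P b. \<forall>B\<in>sat_cuts VQ P b. b (A \<inter> B) \<and> b (A \<union> B)"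
  proof (intro ballI)
    fix A B assume A: "A \<in> sat_cuts VQ P b" and B: "B \<in> sat_cuts VQ P b"
    obtain C1 where C1: "C1 \<in> sat_cuts V R b" "C1 \<inter> VQ = A" using lift[OF A] by blast
    obtain C2 where C2: "C2 \<in> sat_cuts V R b" "C2 \<inter> VQ = B" using lift[OF B] by blast
    have bb: "b (C1 \<inter> C2)" "b (C1 \<union> C2)" using assms(4) C1 C2 unfolding regular_def V_def by auto
    have sub: "C1 \<subseteq> V" "C2 \<subseteq> V" "A \<subseteq> V" "B \<subseteq> V" using C1 C2 A B VQV
      by (auto simp: sat_cuts_def nontrivial_cuts_def cuts_def)
    have "b (A \<inter> B) = b (C1 \<inter> C2)" by (rule dep) (use sub C1 C2 in auto)
    moreover have "b (A \<union> B) = b (C1 \<union> C2)" by (rule dep) (use sub C1 C2 in auto)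
    ultimately show "b (A \<inter> B) \<and> b (A \<union> B)" using bb by simp
  qed
  have clLq: "\<forall>A\<in>Lq. \<forall>B\<in>Lq. A \<inter> B \<in> Lq \<and> A \<union> B \<in> Lq"
    unfolding Lq_def by (rule L_closed[OF regQ])
  have cutsT: "cuts VQ T = Lq"
    unfolding Lq_def by (rule slice_cuts[OF finVQ]) (use assms(6) clLq in \<open>auto simp: VQ_def P_def Lq_def\<close>)
  have TVQ: "T \<subseteq> VQ \<times> VQ" using assms(6) unfolding is_slice_def VQ_def by blast
  have PT: "(u,w) \<in> T\<^sup>*" if uw: "(u,w) \<in> P" for u w
  proof (rule reach_of_cuts[OF TVQ])
    show "w \<in> VQ" using uw inP by auto
    show "\<forall>C\<in>cuts VQ T. w \<in> C \<longrightarrow> u \<in> C"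
    proof (intro ballI impI)
      fix C assume C: "C \<in> cuts VQ T" "w \<in> C"
      hence "C \<in> Lq" using cutsT by simp
      hence "C \<in> cuts VQ P \<or> C = {} \<or> C = VQ" unfolding Lq_def sat_cuts_def nontrivial_cuts_def by auto
      moreover have "u \<in> VQ" using uw inP by auto
      ultimately show "u \<in> C" using C(2) uw unfolding cuts_def by auto
    qed
  qed
  have TR: "(e,(i,len i - 1)) \<in> T\<^sup>*" if e: "e \<in> VQ" and i: "i \<in> Q" for e i
  proof (cases "e = (i, len i - 1)")
    case True thus ?thesis by simp
  next
    case False
    have iv: "i < n" using i assms(2) by auto
    have "(e,(i,len i - 1)) \<in> R\<^sup>*" using Rreach[of "fst e" "snd e" i] e VQV iv by auto
    hence "(e,(i,len i - 1)) \<in> R\<^sup>+" using False rtranclD by metis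
    moreover have "(i, len i - 1) \<in> VQ" using inVQ iv i lenpos[OF iv] by auto
    ultimately have "(e,(i,len i - 1)) \<in> P" using inP e by auto
    thus ?thesis by (rule PT)
  qed
  have FR: "\<exists>k0. earliest len R e i = (i,k0) \<and> k0 < len i \<and> (e,(i,k0)) \<in> R\<^sup>* \<and>
           (\<forall>k. k < len i \<and> (e,(i,k)) \<in> R\<^sup>* \<longrightarrow> k0 \<le> k)" if "e \<in> V" "i < n" for e i
    apply (rule earliest_props2)
    using Rreach[of "fst e" "snd e" i] that lenpos[OF that(2)]
    by (cases e) (metis One_nat_def Suc_le_eq diff_less fst_conv snd_conv zero_less_one)
  have FT: "\<exists>k0. earliest len T e i = (i,k0) \<and> k0 < len i \<and> (e,(i,k0)) \<in> T\<^sup>* \<and>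
           (\<forall>k. k < len i \<and> (e,(i,k)) \<in> T\<^sup>* \<longrightarrow> k0 \<le> k)" if "e \<in> VQ" "i \<in> Q" for e i
  proof (rule earliest_props2)
    have "i < n" using that assms(2) by auto
    hence "len i - 1 < len i" using lenpos by (metis One_nat_def Suc_le_eq diff_less zero_less_one)
    thus "\<exists>k<len i. (e, i, k) \<in> T\<^sup>*" using TR[OF that] by blast
  qed
  have down: "(j,k) \<in> C" if C: "C \<in> cuts V H" and jm: "(j,m) \<in> C" and km: "k \<le> m" for C j k m
    using jm km
  proof (induction m)
    case 0 thus ?case by simp
  next
    case (Suc m)
    show ?case
    proof (cases "k = Suc m")
      case True thus ?thesis using Suc by simp
    next
      case False
      have CV: "C \<subseteq> V" using C by (auto simp: cuts_def)
      hence jv: "j < n" "Suc m < len j" using Suc.prems inV by auto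
      have "(j,m) \<in> V" using jv inV by auto
      moreover have "(j,m) \<notin> final_events n len" using jv unfolding final_events_def by auto
      ultimately have "((j,m),(j,Suc m)) \<in> H" unfolding H_def Hb_def V_def succ_ev_def by auto
      hence "(j,m) \<in> C" using C Suc.prems unfolding cuts_def by auto
      thus ?thesis using Suc False by simp
    qed
  qed
  have Hedge: "(e, Kb len R Q T e i) \<in> H" if "e \<in> V" "i < n" for e i
    using that unfolding H_def Hb_def V_def by blast
  have char: "C \<in> cuts V H \<longleftrightarrow> C \<in> cuts V R \<and> C \<inter> VQ \<in> cuts VQ T" for C
  proof
    assume C: "C \<in> cuts V H"
    have CV: "C \<subseteq> V" using C by (auto simp: cuts_def)
    have Rc: "C \<in> cuts V R" unfolding cuts_def
    proof (safe)
      fix x assume "x \<in> C" thus "x \<in> V" using CV by auto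
    next
      fix u j m assume uv: "(u,(j,m)) \<in> R" and vC: "(j,m) \<in> C"
      have uV: "u \<in> V" and vV: "(j,m) \<in> V" using uv RV by auto
      hence jn: "j < n" "m < len j" using inV by auto
      have "\<exists>k0. Kb len R Q T u j = (j,k0) \<and> k0 \<le> m"
      proof (cases "fst u \<in> Q \<and> j \<in> Q")
        case True
        hence uQ: "u \<in> VQ" using uV VQ_def proj_events_def V_def by auto
        have vQ: "(j,m) \<in> VQ" using True jn inVQ by auto
        have "(u,(j,m)) \<in> P" using inP uQ vQ uv by auto
        hence "(u,(j,m)) \<in> T\<^sup>*" by (rule PT)
        thus ?thesis using FT[OF uQ, of j] True jn unfolding Kb_def by auto
      next
        case False
        thus ?thesis using FR[OF uV jn(1)] jn uv unfolding Kb_def by auto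
      qed
      then obtain k0 where "Kb len R Q T u j = (j,k0)" "k0 \<le> m" by blast
      hence "Kb len R Q T u j \<in> C" using down[OF C vC] by simp
      thus "u \<in> C" using C Hedge[OF uV jn(1)] unfolding cuts_def by auto
    qed
    have Tc: "C \<inter> VQ \<in> cuts VQ T" unfolding cuts_def
    proof (safe)
      fix u j m assume uv: "(u,(j,m)) \<in> T" and vC: "(j,m) \<in> C" and vQ: "(j,m) \<in> VQ"
      have uQ: "u \<in> VQ" using uv TVQ by auto
      have uV: "u \<in> V" using uQ VQV by auto
      have jn: "j < n" "m < len j" "j \<in> Q" using vQ inVQ by auto
      have fu: "fst u \<in> Q" using uQ unfolding VQ_def proj_events_def by auto
      have "(u,(j,m)) \<in> T\<^sup>*" using uv by auto
      then obtain k0 where "Kb len R Q T u j = (j,k0)" "k0 \<le> m"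
        using FT[OF uQ jn(3)] jn fu unfolding Kb_def by auto
      hence "Kb len R Q T u j \<in> C" using down[OF C vC] by simp
      thus "u \<in> C" using C Hedge[OF uV jn(1)] unfolding cuts_def by auto
      show "u \<in> VQ" by (rule uQ)
    qed
    show "C \<in> cuts V R \<and> C \<inter> VQ \<in> cuts VQ T" using Rc Tc by simp
  next
    assume "C \<in> cuts V R \<and> C \<inter> VQ \<in> cuts VQ T"
    hence Rc: "C \<in> cuts V R" and Tc: "C \<inter> VQ \<in> cuts VQ T" by auto
    have CV: "C \<subseteq> V" using Rc by (auto simp: cuts_def)
    show "C \<in> cuts V H" unfolding cuts_def
    proof (safe)
      fix x assume "x \<in> C" thus "x \<in> V" using CV by auto
    next
      fix u w assume uw: "(u,w) \<in> H" and wC: "w \<in> C"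
      show "u \<in> C"
      proof (cases "w = succ_ev u \<and> u \<in> V \<and> u \<notin> final_events n len")
        case True
        obtain j k where u: "u = (j,k)" by (cases u)
        have "j < n" "k < len j" using True u inV by auto
        moreover have "k \<noteq> len j - 1"
        proof
          assume "k = len j - 1"
          moreover have "(j, len j - 1) \<in> final_events n len" using \<open>j < n\<close> unfolding final_events_def by blast
          ultimately show False using True u by simp
        qed
        ultimately have sk: "Suc k < len j" by linarith
        have wsu: "w = (j, Suc k)" using True u by (simp add: succ_ev_def)
        have "(u,w) \<in> R\<^sup>+" unfolding u wsu by (rule po[OF \<open>j < n\<close> sk])
        thus ?thesis using cut_rtrancl[OF Rc trancl_into_rtrancl] wC by blast
      next
        case False
        then obtain i where ui: "u \<in> V" "i < n" "w = Kb len R Q T u i"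
          using uw unfolding H_def Hb_def V_def by auto
        show ?thesis
        proof (cases "fst u \<in> Q \<and> i \<in> Q")
          case True
          hence uQ: "u \<in> VQ" using ui VQ_def proj_events_def V_def by auto
          obtain k0 where k0: "earliest len T u i = (i,k0)" "k0 < len i" "(u,(i,k0)) \<in> T\<^sup>*"
            using FT[OF uQ, of i] True by auto
          have wK: "w = (i,k0)" using ui True k0 unfolding Kb_def by auto
          have "w \<in> C \<inter> VQ" using wC wK inVQ ui True k0 by auto
          hence "u \<in> C \<inter> VQ" using cut_rtrancl[OF Tc k0(3)] wK by auto
          thus ?thesis by simp
        next
          case False
          obtain k0 where k0: "earliest len R u i = (i,k0)" "(u,(i,k0)) \<in> R\<^sup>*"
            using FR[OF ui(1,2)] by auto
          have wK: "w = (i,k0)" using ui False k0 unfolding Kb_def by auto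
          thus ?thesis using cut_rtrancl[OF Rc k0(2)] wC by auto
        qed
      qed
    qed
  qed
  obtain q where q: "q \<in> Q" using assms(3) by blast
  have qn: "q < n" using q assms(2) by auto
  have empty_arg: "C = {}" if Rc: "C \<in> cuts V R" and E: "C \<inter> VQ = {}" for C
  proof (rule ccontr)
    assume "C \<noteq> {}"
    then obtain j k where jk: "(j,k) \<in> C" by auto
    have CV: "C \<subseteq> V" using Rc by (auto simp: cuts_def)
    hence jn: "j < n" "k < len j" using jk inV by auto
    have "((j,0),(j,k)) \<in> R\<^sup>*" using proc_order[OF comp jn(1) _ jn(2)] by simp
    hence "(j,0) \<in> C" using cut_rtrancl[OF Rc] jk by auto
    hence "(q,0) \<in> C" using cut_rtrancl[OF Rc init[OF qn jn(1)]] by auto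
    moreover have "(q,0) \<in> VQ" using inVQ qn q lenpos[OF qn] by auto
    ultimately show False using E by auto
  qed
  have full_arg: "C = V" if Rc: "C \<in> cuts V R" and E: "C \<inter> VQ = VQ" for C
  proof
    show "C \<subseteq> V" using Rc by (auto simp: cuts_def)
    have fq: "(q, len q - 1) \<in> C" using E inVQ qn q lenpos[OF qn] by auto
    show "V \<subseteq> C"
    proof
      fix e assume e: "e \<in> V"
      have "(e,(q,len q - 1)) \<in> R\<^sup>*" using Rreach[of "fst e" "snd e" q] e qn by auto
      thus "e \<in> C" using cut_rtrancl[OF Rc] fq by auto
    qed
  qed
  have main: "cuts V H = L"
  proof
    show "cuts V H \<subseteq> L"
    proof
      fix C assume "C \<in> cuts V H"
      hence Rc: "C \<in> cuts V R" and Tc: "C \<inter> VQ \<in> Lq" using char cutsT by auto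
      have CV: "C \<subseteq> V" using Rc by (auto simp: cuts_def)
      show "C \<in> L"
      proof (cases "C = {} \<or> C = V")
        case True thus ?thesis unfolding L_def by auto
      next
        case False
        hence "C \<inter> VQ \<noteq> {}" "C \<inter> VQ \<noteq> VQ" using empty_arg[OF Rc] full_arg[OF Rc] by auto
        hence "b (C \<inter> VQ)" using Tc unfolding Lq_def sat_cuts_def by auto
        moreover have "b (C \<inter> VQ) = b C" by (rule dep) (use CV VQV in auto)
        ultimately show ?thesis using False Rc unfolding L_def sat_cuts_def nontrivial_cuts_def by auto
      qed
    qed
  next
    show "L \<subseteq> cuts V H"
    proof
      fix C assume C: "C \<in> L"
      have Rc: "C \<in> cuts V R" using C RV unfolding L_def sat_cuts_def nontrivial_cuts_def cuts_def
        by auto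
      have CV: "C \<subseteq> V" using Rc by (auto simp: cuts_def)
      have "C \<inter> VQ \<in> Lq"
      proof (cases "C = {} \<or> C = V")
        case True thus ?thesis unfolding Lq_def using VQV by auto
      next
        case False
        hence bC: "b C" using C unfolding L_def sat_cuts_def by auto
        have "b (C \<inter> VQ) = b C" by (rule dep) (use CV VQV in auto)
        hence bq: "b (C \<inter> VQ)" using bC by simp
        have "C \<inter> VQ \<in> cuts VQ P" using Rc unfolding cuts_def
        proof (safe)
          fix u w assume "(u,w) \<in> P" "w \<in> C"
          hence "(u,w) \<in> R\<^sup>+" "w \<in> C" using inP by auto
          thus "u \<in> C" using cut_rtrancl[OF Rc trancl_into_rtrancl] by blast
        next
          fix u w assume "(u,w) \<in> P" thus "u \<in> VQ" using inP by auto
        qed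
        thus ?thesis using bq unfolding Lq_def sat_cuts_def nontrivial_cuts_def by auto
      qed
      thus "C \<in> cuts V H" using char Rc cutsT by auto
    qed
  qed
  show ?thesis using main cutsS unfolding V_def H_def by simp
qed

end
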